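(* Let $n\ge 2$, $d\ge 1$, $\tau>0$, $\sigma>0$. Let $\mu^\star_1,\mu^\star_2\stackrel{\mathrm{i.i.d.}}{\sim}\mathcal N(0,\tau^2 I_d)$ and $\xi_1,\dots,\xi_n\stackrel{\mathrm{i.i.d.}}{\sim}\mathcal N(0,\sigma^2 I_d)$, with the centers independent of the noise. Let $z^\star_1,\dots,z^\star_n\in\{1,2\}$ be fixed labels such that both classes $S^\star_\ell=\{i: z^\star_i=\ell\}$ are nonempty, and set $x_i=\mu^\star_{z^\star_i}+\xi_i$. Let $\{C_1,C_2\}$ be a fixed partition of $[n]$ into two nonempty sets, with centroids $\widehat\mu_j=|C_j|^{-1}\sum_{k\in C_j}x_k$. Fix $i\in[n]$, let $j$ be such that $i\in C_j$, let $\overline{j}$ be the other index in $\{1,2\}$, and let $\ell$ be such that $i\in S^\star_\ell$. Then $$\|x_i-\widehat\mu_{\overline j}\|^2\sim \alpha\,\chi^2_d,\qquad \alpha=2\tau^2(1-R^\ell_{\overline j})^2+\Bigl(1+\tfrac{1}{|C_{\overline j}|}\Bigr)\sigma^2,$$ where $R^\ell_{\overline j}=|C_{\overline j}\cap S^\star_\ell|/|C_{\overline j}|$.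
   Context: $[n]=\{1,\dots,n\}$. For $a>0$, "$Y\sim a\chi^2_d$" means $Y/a$ is chi-squared with $d$ degrees of freedom. Randomness is only over the centers and noise; labels and partition are deterministic. *)

theory Defs
  imports "HOL-Probability.Probability"
begin

definition chi2_density :: "nat \<Rightarrow> real \<Rightarrow> real" where
  "chi2_density k x =
     (if 0 < x then x powr (real k / 2 - 1) * exp (- x / 2)
                    / (2 powr (real k / 2) * Gamma (real k / 2))
      else 0)"

definition scaled_chi2_distributed ::
  "'a measure \<Rightarrow> ('a \<Rightarrow> real) \<Rightarrow> real \<Rightarrow> nat \<Rightarrow> bool" where
  "scaled_chi2_distributed M Y a k \<longleftrightarrow>
     distributed M lborel (\<lambda>\<omega>. Y \<omega> / a) (\<lambda>x. ennreal (chi2_density k x))"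

definition obs ::
  "(nat \<Rightarrow> 'a \<Rightarrow> real^'d) \<Rightarrow> (nat \<Rightarrow> 'a \<Rightarrow> real^'d) \<Rightarrow> (nat \<Rightarrow> nat) \<Rightarrow> nat \<Rightarrow> 'a \<Rightarrow> real^'d" where
  "obs mu xi z k \<omega> = mu (z k) \<omega> + xi k \<omega>"

definition centroid ::
  "(nat \<Rightarrow> 'a \<Rightarrow> real^'d) \<Rightarrow> (nat \<Rightarrow> 'a \<Rightarrow> real^'d) \<Rightarrow> (nat \<Rightarrow> nat) \<Rightarrow> nat set \<Rightarrow> 'a \<Rightarrow> real^'d" where
  "centroid mu xi z C \<omega> = (1 / real (card C)) *\<^sub>R (\<Sum>k\<in>C. obs mu xi z k \<omega>)"

end

theory Submission
  imports Defs
begin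


lemma chi2_density_nonneg[simp]: "0 \<le> chi2_density k x"
proof (cases "k = 0")
  case True thus ?thesis by (simp add: chi2_density_def)
next
  case False thus ?thesis unfolding chi2_density_def
  by (auto intro!: divide_nonneg_pos mult_pos_pos Gamma_real_pos)
qed

lemma borel_measurable_chi2_density[measurable]: "chi2_density k \<in> borel_measurable borel"
  unfolding chi2_density_def by measurable

lemma nn_integral_chi2_density:
  assumes "k > 0"
  shows "(\<integral>\<^sup>+x. ennreal (chi2_density k x) \<partial>lborel) = 1"
proof -
  define s where "s = real k / 2"
  have s: "s > 0" using assms by (simp add: s_def)
  have G: "Gamma s > 0" using s by (simp add: Gamma_real_pos)
  have "(\<integral>\<^sup>+x. ennreal (chi2_density k x) \<partial>lborel) =
        (\<integral>\<^sup>+x. ennreal (2 * chi2_density k (0 + 2 * x)) \<partial>lborel)"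
    by (subst nn_integral_real_affine[where c=2 and t=0]) (auto simp: nn_integral_cmult[symmetric] ennreal_mult)
  also have "\<dots> = (\<integral>\<^sup>+x. ennreal (1 / Gamma s) * ennreal (indicator {0..} x * x powr (s - 1) / exp x) \<partial>lborel)"
  proof (rule nn_integral_cong)
    fix x :: real
    have "2 * chi2_density k (0 + 2 * x) = (1 / Gamma s) * (indicator {0..} x * x powr (s - 1) / exp x)"
      using G by (auto simp: chi2_density_def s_def[symmetric] indicator_def
       powr_mult exp_minus field_simps powr_diff)
    thus "ennreal (2 * chi2_density k (0 + 2 * x)) =
         ennreal (1 / Gamma s) * ennreal (indicator {0..} x * x powr (s - 1) / exp x)"
      using G by (simp add: ennreal_mult'[symmetric])
  qed
  also have "\<dots> = ennreal (1 / Gamma s) * ennreal (Gamma s)"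
    by (subst nn_integral_cmult) (simp_all add: Gamma_conv_nn_integral_real[OF s])
  also have "\<dots> = 1" using G by (simp add: ennreal_mult'[symmetric])
  finally show ?thesis .
qed

lemma prob_space_chi2_density: "k > 0 \<Longrightarrow> prob_space (density lborel (\<lambda>x. ennreal (chi2_density k x)))"
  by (rule prob_spaceI) (simp add: emeasure_density nn_integral_chi2_density)

lemma chi2_conv_pointwise:
  fixes a b :: nat and x t :: real
  assumes "a > 0" "b > 0" "x > 0"
  defines "Da \<equiv> 2 powr (real a / 2) * Gamma (real a / 2)"
      and "Db \<equiv> 2 powr (real b / 2) * Gamma (real b / 2)"
      and "Dab \<equiv> 2 powr (real (a + b) / 2) * Gamma (real (a + b) / 2)"
  shows "x * (chi2_density a (x - (0 + x * t)) * chi2_density b (0 + x * t)) =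
     (Dab / (Da * Db) * chi2_density (a + b) x) *
     ((1 - t) powr (real a / 2 - 1) * t powr (real b / 2 - 1) * indicator {0<..<1} t)"
proof (cases "0 < t \<and> t < 1")
  case True
  define p where "p = real a / 2"
  define q where "q = real b / 2"
  have pq: "real (a + b) / 2 - 1 = (p - 1) + (q - 1) + 1" by (simp add: p_def q_def field_simps)
  have e1: "x - x * t = x * (1 - t)" by (simp add: algebra_simps)
  have pos: "x - x * t > 0" "x * t > 0" using True assms by (auto simp: e1)
  have "x * (chi2_density a (x - (0 + x * t)) * chi2_density b (0 + x * t)) =
     x * ((x * (1 - t)) powr (p - 1) * exp (- (x * (1 - t)) / 2) / Da *
         ((x * t) powr (q - 1) * exp (- (x * t) / 2) / Db))"
    using pos by (simp add: chi2_density_def Da_def Db_def p_def q_def e1)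
  also have "\<dots> = (x powr ((p - 1) + (q - 1) + 1) * exp (- x / 2)) / (Da * Db) *
       ((1 - t) powr (p - 1) * t powr (q - 1))"
  proof -
    have h1: "(x * (1 - t)) powr (p - 1) = x powr (p-1) * (1-t) powr (p-1)"
      using True assms by (simp add: powr_mult)
    have h2: "(x * t) powr (q - 1) = x powr (q-1) * t powr (q-1)"
      using True assms by (simp add: powr_mult)
    have h3: "x powr ((p - 1) + (q - 1) + 1) = x powr (p-1) * x powr (q-1) * x"
      using assms by (simp only: powr_add powr_one_gt_zero_iff powr_one)
    have h4: "exp (- (x * (1 - t)) / 2) * exp (- (x * t) / 2) = exp (-x/2)"
    proof -
      have e: "- (x * (1 - t)) / 2 + - (x * t) / 2 = - x / 2" by (simp add: right_diff_distrib diff_divide_distrib)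
      show ?thesis by (simp only: exp_add[symmetric] e)
    qed
    have D: "Da > 0" "Db > 0" using assms by (auto simp: Da_def Db_def Gamma_real_pos)
    show ?thesis unfolding h1 h2 h3 h4[symmetric] using D by (simp add: field_simps)
  qed
  also have "\<dots> = (Dab / (Da * Db) * chi2_density (a + b) x) *
     ((1 - t) powr (real a / 2 - 1) * t powr (real b / 2 - 1) * indicator {0<..<1} t)"
  proof -
    have D: "Da > 0" "Db > 0" "Dab > 0" using assms by (auto simp: Da_def Db_def Dab_def Gamma_real_pos)
    have c: "chi2_density (a + b) x = x powr ((p - 1) + (q - 1) + 1) * exp (-x/2) / Dab"
      unfolding chi2_density_def Dab_def using assms by (simp only: if_True pq)
    show ?thesis unfolding c p_def[symmetric] q_def[symmetric] using True D
      by (simp add: field_simps)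
  qed
  finally show ?thesis .
next
  case False
  have "x - x * t \<le> 0 \<or> x * t \<le> 0"
  proof (cases "t \<le> 0")
    case True then have "x*t \<le> 0" using assms by (simp add: mult_nonneg_nonpos)
    thus ?thesis by simp
  next
    case F: False
    with False have "t \<ge> 1" by simp
    hence "x * 1 \<le> x * t" using assms by (intro mult_left_mono) auto
    thus ?thesis by simp
  qed
  with False show ?thesis by (auto simp: chi2_density_def)
qed

lemma convolution_chi2_density:
  fixes a b :: nat
  assumes "a > 0" "b > 0"
  shows "(\<lambda>x. \<integral>\<^sup>+y. ennreal (chi2_density a (x - y)) * ennreal (chi2_density b y) \<partial>lborel) =
    (\<lambda>x. ennreal (chi2_density (a + b) x))" (is "?LHS = ?RHS")
proof -
  define Da where "Da = 2 powr (real a / 2) * Gamma (real a / 2)"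
  define Db where "Db = 2 powr (real b / 2) * Gamma (real b / 2)"
  define Dab where "Dab = 2 powr (real (a + b) / 2) * Gamma (real (a + b) / 2)"
  define Kr where "Kr = Dab / (Da * Db)"
  define g where "g = (\<lambda>t::real. (1 - t) powr (real a / 2 - 1) * t powr (real b / 2 - 1) * indicator {0<..<1} t)"
  define J where "J = (\<integral>\<^sup>+t. ennreal (g t) \<partial>lborel)"
  have Kr0: "Kr \<ge> 0" using assms
    by (auto simp: Kr_def Da_def Db_def Dab_def Gamma_real_pos intro!: divide_nonneg_pos mult_pos_pos less_imp_le)
  have g0: "g t \<ge> 0" for t by (auto simp: g_def indicator_def)
  have mg[measurable]: "g \<in> borel_measurable borel" unfolding g_def by measurable
  have pt: "?LHS x = (ennreal Kr * J) * ennreal (chi2_density (a + b) x)" for x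
  proof (cases "x > 0")
    case True
    have "?LHS x = (\<integral>\<^sup>+y. ennreal (chi2_density a (x - y) * chi2_density b y) \<partial>lborel)"
      by (simp add: ennreal_mult')
    also have "\<dots> = ennreal x * (\<integral>\<^sup>+t. ennreal (chi2_density a (x - (0 + x * t)) * chi2_density b (0 + x * t)) \<partial>lborel)"
      using True by (subst nn_integral_real_affine[where c=x and t=0]) auto
    also have "\<dots> = (\<integral>\<^sup>+t. ennreal (x * (chi2_density a (x - (0 + x * t)) * chi2_density b (0 + x * t))) \<partial>lborel)"
      using True by (subst nn_integral_cmult[symmetric]) (auto simp: ennreal_mult')
    also have "\<dots> = (\<integral>\<^sup>+t. ennreal (Kr * chi2_density (a + b) x) * ennreal (g t) \<partial>lborel)"
    proof (rule nn_integral_cong)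
      fix t :: real
      have "x * (chi2_density a (x - (0 + x * t)) * chi2_density b (0 + x * t)) = (Kr * chi2_density (a + b) x) * g t"
        unfolding Kr_def Da_def Db_def Dab_def g_def by (rule chi2_conv_pointwise[OF assms True])
      thus "ennreal (x * (chi2_density a (x - (0 + x * t)) * chi2_density b (0 + x * t))) =
            ennreal (Kr * chi2_density (a + b) x) * ennreal (g t)"
        using Kr0 by (simp add: ennreal_mult')
    qed
    also have "\<dots> = ennreal (Kr * chi2_density (a + b) x) * J"
      by (simp add: nn_integral_cmult J_def)
    finally show ?thesis using Kr0 by (simp add: ennreal_mult' mult_ac)
  next
    case False
    have "?LHS x = 0"
      using False by (auto simp: chi2_density_def intro!: nn_integral_zero')
    thus ?thesis using False by (simp add: chi2_density_def)
  qed
  have "prob_space (density lborel ?LHS)"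
    by (intro prob_space_convolution_density prob_space_chi2_density assms) auto
  hence "integral\<^sup>N lborel ?LHS = 1"
    by (auto dest!: prob_space.emeasure_space_1 simp: emeasure_density)
  also have "integral\<^sup>N lborel ?LHS = (ennreal Kr * J) * 1"
    unfolding pt using assms
    by (subst nn_integral_cmult) (auto simp: nn_integral_chi2_density)
  finally have "ennreal Kr * J = 1" by simp
  thus ?thesis unfolding pt[abs_def] by simp
qed

lemma chi2_1_sq:
  fixes x :: real assumes "x > 0"
  shows "chi2_density 1 (x\<^sup>2) * (2 * x) = 2 * std_normal_density x"
proof -
  have p: "(x\<^sup>2) powr (1/2 - 1) = 1 / x"
  proof -
    have "(x\<^sup>2) powr (1/2 - 1) = (x\<^sup>2) powr (- (1/2))" by simp
    also have "\<dots> = inverse (sqrt (x\<^sup>2))" using assms by (simp add: powr_minus powr_half_sqrt)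
    also have "\<dots> = 1 / x" using assms by (simp add: divide_inverse)
    finally show ?thesis .
  qed
  have s: "sqrt (2 * pi) = sqrt 2 * sqrt pi" by (simp add: real_sqrt_mult)
  show ?thesis
    using assms
    by (simp add: chi2_density_def Gamma_one_half_real powr_half_sqrt std_normal_density_def)
       (simp add: p[simplified] s field_simps real_sqrt_mult)
qed

lemma nn_integral_SUP_Icc:
  fixes f :: "real \<Rightarrow> ennreal" and h :: "nat \<Rightarrow> real"
  assumes [measurable]: "f \<in> borel_measurable borel" and "incseq h" and unb: "\<And>t. \<exists>n. t \<le> h n"
  shows "(\<integral>\<^sup>+x. f x * indicator {0..} x \<partial>lborel) = (SUP n. \<integral>\<^sup>+x. f x * indicator {0..h n} x \<partial>lborel)"
proof -
  have pt: "(SUP n. f x * indicator {0..h n} x) = f x * indicator {0..} x" for x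
  proof (rule antisym)
    show "(SUP n. f x * indicator {0..h n} x) \<le> f x * indicator {0..} x"
      by (rule SUP_least) (auto simp: indicator_def)
    obtain N where "x \<le> h N" using unb by blast
    hence "f x * indicator {0..} x = f x * indicator {0..h N} x" by (auto simp: indicator_def)
    also have "\<dots> \<le> (SUP n. f x * indicator {0..h n} x)" by (rule SUP_upper) simp
    finally show "f x * indicator {0..} x \<le> (SUP n. f x * indicator {0..h n} x)" .
  qed
  have inc: "incseq (\<lambda>n x. f x * indicator {0..h n} x)"
    using assms(2) by (auto simp: incseq_def le_fun_def indicator_def intro!: mult_left_mono)
       (meson order_trans)
  show ?thesis
    unfolding pt[symmetric]
    by (rule nn_integral_monotone_convergence_SUP[OF inc]) measurable
qed

lemma sq_normal_integral:
  assumes A[measurable]: "A \<in> sets borel"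
  shows "(\<integral>\<^sup>+x. ennreal (std_normal_density x) * indicator A (x\<^sup>2) \<partial>lborel) =
         (\<integral>\<^sup>+t. ennreal (chi2_density 1 t) * indicator A t \<partial>lborel)"
proof -
  define u where "u = (\<lambda>x. ennreal (std_normal_density x) * indicator A (x\<^sup>2))"
  have mu[measurable]: "u \<in> borel_measurable borel" unfolding u_def by measurable
  define G where "G = (\<lambda>x. ennreal (2 * std_normal_density x * indicator A (x\<^sup>2) * indicator {0<..} x))"
  have mG[measurable]: "G \<in> borel_measurable borel" unfolding G_def by measurable
  define F where "F = (\<lambda>t. chi2_density 1 t * indicator A t)"
  have mF[measurable]: "F \<in> borel_measurable borel" unfolding F_def by measurable
  have "(\<integral>\<^sup>+x. u x \<partial>lborel) = (\<integral>\<^sup>+x. u x * indicator {..0} x + u x * indicator {0<..} x \<partial>lborel)"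
    by (rule nn_integral_cong) (auto simp: indicator_def)
  also have "\<dots> = (\<integral>\<^sup>+x. u x * indicator {..0} x \<partial>lborel) + (\<integral>\<^sup>+x. u x * indicator {0<..} x \<partial>lborel)"
    by (rule nn_integral_add) auto
  also have "(\<integral>\<^sup>+x. u x * indicator {..0} x \<partial>lborel) = (\<integral>\<^sup>+x. u (0 + -1 * x) * indicator {..0} (0 + -1 * x) \<partial>lborel)"
    by (subst nn_integral_real_affine[where c="-1" and t=0]) auto
  also have "\<dots> = (\<integral>\<^sup>+x. u x * indicator {0<..} x \<partial>lborel)"
    by (rule nn_integral_cong_AE, rule AE_mp[OF AE_lborel_singleton[of 0]])
       (auto simp: u_def std_normal_density_def indicator_def)
  also have "(\<integral>\<^sup>+x. u x * indicator {0<..} x \<partial>lborel) + (\<integral>\<^sup>+x. u x * indicator {0<..} x \<partial>lborel)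
      = (\<integral>\<^sup>+x. u x * indicator {0<..} x + u x * indicator {0<..} x \<partial>lborel)"
    by (rule nn_integral_add[symmetric]) measurable
  also have "\<dots> = (\<integral>\<^sup>+x. G x \<partial>lborel)"
  proof (rule nn_integral_cong)
    fix x :: real
    have "ennreal (std_normal_density x) + ennreal (std_normal_density x) = ennreal (2 * std_normal_density x)"
      by (subst mult_2, rule ennreal_plus[symmetric]) simp_all
    thus "u x * indicator {0<..} x + u x * indicator {0<..} x = G x"
      unfolding u_def G_def by (cases "x > 0"; cases "x\<^sup>2 \<in> A") (simp_all only: indicator_simps greaterThan_iff mult_1_right mult_zero_right mult_1 ennreal_0 add_0 ennreal_1 not_less not_False_eq_True mult_zero_left add_0_right)
  qed
  also have "(\<integral>\<^sup>+x. G x \<partial>lborel) = (\<integral>\<^sup>+x. G x * indicator {0..} x \<partial>lborel)"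
    by (rule nn_integral_cong) (auto simp: G_def split: split_indicator)
  also have "\<dots> = (SUP n. \<integral>\<^sup>+x. G x * indicator {0..real n} x \<partial>lborel)"
    by (rule nn_integral_SUP_Icc) (auto simp: incseq_def intro: real_arch_simple)
  also have "\<dots> = (SUP n. \<integral>\<^sup>+t. ennreal (F t) * indicator {0..(real n)^2} t \<partial>lborel)"
  proof (rule SUP_cong[OF refl])
    fix n :: nat
    have "(\<integral>\<^sup>+t. ennreal (F t) * indicator {0..(real n)^2} t \<partial>lborel) =
          (\<integral>\<^sup>+t. ennreal (F t * indicator {(\<lambda>x. x^2) 0..(\<lambda>x. x^2) (real n)} t) \<partial>lborel)"
      by (rule nn_integral_cong) (auto split: split_indicator)
    also have "\<dots> = (\<integral>\<^sup>+x. ennreal (F (x^2) * (2 * x) * indicator {0..real n} x) \<partial>lborel)"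
      by (rule nn_integral_substitution[where g'="\<lambda>x. 2 * x"])
         (auto simp: set_borel_measurable_def intro!: derivative_eq_intros continuous_intros)
    also have "\<dots> = (\<integral>\<^sup>+x. G x * indicator {0..real n} x \<partial>lborel)"
    proof (rule nn_integral_cong)
      fix x :: real
      show "ennreal (F (x^2) * (2 * x) * indicator {0..real n} x) = G x * indicator {0..real n} x"
      proof (cases "x > 0")
        case True
        have "F (x^2) * (2 * x) = 2 * std_normal_density x * indicator A (x\<^sup>2)"
          using chi2_1_sq[OF True] by (simp add: F_def)
        hence e: "F (x^2) * (2 * x) * indicator {0..real n} x =
            2 * std_normal_density x * indicator A (x\<^sup>2) * indicator {0<..} x * indicator {0..real n} x"
          using True by simp
        show ?thesis unfolding e G_def by (auto split: split_indicator)
      next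
        case False
        thus ?thesis by (auto simp: G_def F_def chi2_density_def indicator_def)
      qed
    qed
    finally show "(\<integral>\<^sup>+x. G x * indicator {0..real n} x \<partial>lborel) =
        (\<integral>\<^sup>+t. ennreal (F t) * indicator {0..(real n)^2} t \<partial>lborel)" ..
  qed
  also have "\<dots> = (\<integral>\<^sup>+t. ennreal (F t) * indicator {0..} t \<partial>lborel)"
  proof (rule nn_integral_SUP_Icc[symmetric])
    show "incseq (\<lambda>n. (real n)^2)" by (auto simp: incseq_def intro!: power_mono)
    fix t :: real
    obtain n :: nat where "t \<le> real n" using real_arch_simple by blast
    moreover have "real n \<le> (real n)^2" by (cases n) (auto simp: power2_eq_square)
    ultimately show "\<exists>n. t \<le> (real n)^2" by (meson order_trans)
  qed measurable
  also have "\<dots> = (\<integral>\<^sup>+t. ennreal (chi2_density 1 t) * indicator A t \<partial>lborel)"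
    by (rule nn_integral_cong) (auto simp: F_def chi2_density_def split: split_indicator)
  finally show ?thesis unfolding u_def .
qed

lemma (in prob_space) chi2_of_sq:
  assumes X: "distributed M lborel X (\<lambda>x. ennreal (std_normal_density x))"
  shows "distributed M lborel (\<lambda>\<omega>. (X \<omega>)\<^sup>2) (\<lambda>x. ennreal (chi2_density 1 x))"
proof -
  have Xm[measurable]: "X \<in> borel_measurable M" using distributed_measurable[OF X] by simp
  have "distr M lborel (\<lambda>\<omega>. (X \<omega>)\<^sup>2) = distr (distr M lborel X) lborel (\<lambda>x. x\<^sup>2)"
    by (subst distr_distr) (auto simp: comp_def)
  also have "\<dots> = distr (density lborel (\<lambda>x. ennreal (std_normal_density x))) lborel (\<lambda>x. x\<^sup>2)"
    by (simp add: distributed_distr_eq_density[OF X])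
  also have "\<dots> = density lborel (\<lambda>x. ennreal (chi2_density 1 x))"
  proof (rule measure_eqI)
    fix A assume "A \<in> sets (distr (density lborel (\<lambda>x. ennreal (std_normal_density x))) lborel (\<lambda>x. x\<^sup>2))"
    hence A[measurable]: "A \<in> sets borel" by simp
    have "emeasure (distr (density lborel (\<lambda>x. ennreal (std_normal_density x))) lborel (\<lambda>x. x\<^sup>2)) A
        = (\<integral>\<^sup>+x. ennreal (std_normal_density x) * indicator ((\<lambda>x. x\<^sup>2) -` A \<inter> UNIV) x \<partial>lborel)"
    proof -
      have P: "(\<lambda>x::real. x\<^sup>2) -` A \<in> sets lborel"
        using measurable_sets[of "\<lambda>x::real. x\<^sup>2" borel borel A] A by simp
      show ?thesis by (subst emeasure_distr) (auto simp: emeasure_density[OF _ P])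
    qed
    also have "\<dots> = (\<integral>\<^sup>+x. ennreal (std_normal_density x) * indicator A (x\<^sup>2) \<partial>lborel)"
      by (rule nn_integral_cong) (auto split: split_indicator)
    also have "\<dots> = emeasure (density lborel (\<lambda>x. ennreal (chi2_density 1 x))) A"
      by (simp add: sq_normal_integral emeasure_density)
    finally show "emeasure (distr (density lborel (\<lambda>x. ennreal (std_normal_density x))) lborel (\<lambda>x. x\<^sup>2)) A
        = emeasure (density lborel (\<lambda>x. ennreal (chi2_density 1 x))) A" .
  qed simp
  finally show ?thesis unfolding distributed_def by simp
qed

lemma (in prob_space) chi2_sum_sq:
  assumes "finite F" "F \<noteq> {}" "indep_vars (\<lambda>_. borel) Z F"
    and N: "\<And>c. c \<in> F \<Longrightarrow> distributed M lborel (Z c) (\<lambda>x. ennreal (std_normal_density x))"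
  shows "distributed M lborel (\<lambda>\<omega>. \<Sum>c\<in>F. (Z c \<omega>)\<^sup>2) (\<lambda>x. ennreal (chi2_density (card F) x))"
  using assms
proof (induct F rule: finite_ne_induct)
  case (singleton c) thus ?case using chi2_of_sq[of "Z c"] by simp
next
  case (insert c F)
  have ind2: "indep_vars (\<lambda>_. borel) (\<lambda>c \<omega>. (Z c \<omega>)\<^sup>2) (insert c F)"
    by (rule indep_vars_compose2[OF insert(5)]) simp
  have iv: "indep_var borel (\<lambda>\<omega>. (Z c \<omega>)\<^sup>2) borel (\<lambda>\<omega>. \<Sum>c\<in>F. (Z c \<omega>)\<^sup>2)"
    using indep_vars_sum[OF insert(1,3) ind2] .
  have IH: "distributed M lborel (\<lambda>\<omega>. \<Sum>c\<in>F. (Z c \<omega>)\<^sup>2) (\<lambda>x. ennreal (chi2_density (card F) x))"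
    using insert by (auto intro: indep_vars_subset)
  have "card F > 0" using insert by auto
  have "distributed M lborel (\<lambda>\<omega>. (Z c \<omega>)\<^sup>2 + (\<Sum>c\<in>F. (Z c \<omega>)\<^sup>2))
      (\<lambda>x. \<integral>\<^sup>+y. ennreal (chi2_density 1 (x - y)) * ennreal (chi2_density (card F) y) \<partial>lborel)"
    by (rule distributed_convolution[OF iv chi2_of_sq[OF insert(6)] IH]) simp
  also have "(\<lambda>x. \<integral>\<^sup>+y. ennreal (chi2_density 1 (x - y)) * ennreal (chi2_density (card F) y) \<partial>lborel)
      = (\<lambda>x. ennreal (chi2_density (1 + card F) x))"
    using \<open>card F > 0\<close> by (rule convolution_chi2_density[OF zero_less_one])
  finally show ?case using insert by simp
qed


lemma (in prob_space) weighted_sum_normal: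
  assumes fin: "finite I" and ind: "indep_vars (\<lambda>_. borel) X I"
    and pos: "\<And>s. s \<in> I \<Longrightarrow> sd s > 0"
    and N: "\<And>s. s \<in> I \<Longrightarrow> distributed M lborel (X s) (\<lambda>x. ennreal (normal_density 0 (sd s) x))"
    and nz: "s0 \<in> I" "w s0 \<noteq> 0"
  shows "distributed M lborel (\<lambda>\<omega>. \<Sum>s\<in>I. w s * X s \<omega>)
           (\<lambda>x. ennreal (normal_density 0 (sqrt (\<Sum>s\<in>I. (w s * sd s)\<^sup>2)) x))"
proof -
  define I' where "I' = {s\<in>I. w s \<noteq> 0}"
  have I': "finite I'" "I' \<noteq> {}" "I' \<subseteq> I" using fin nz by (auto simp: I'_def)
  have ind': "indep_vars (\<lambda>_. borel) (\<lambda>s \<omega>. w s * X s \<omega>) I'"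
    by (rule indep_vars_compose2[OF indep_vars_subset[OF ind I'(3)]]) simp
  have N': "distributed M lborel (\<lambda>\<omega>. w s * X s \<omega>) (\<lambda>x. ennreal (normal_density 0 (\<bar>w s\<bar> * sd s) x))"
    if "s \<in> I'" for s
  proof -
    have "distributed M lborel (\<lambda>\<omega>. 0 + w s * X s \<omega>) (\<lambda>x. ennreal (normal_density (0 + w s * 0) (\<bar>w s\<bar> * sd s) x))"
      using that by (intro normal_density_affine N pos) (auto simp: I'_def)
    thus ?thesis by simp
  qed
  have "distributed M lborel (\<lambda>\<omega>. \<Sum>s\<in>I'. w s * X s \<omega>)
      (\<lambda>x. ennreal (normal_density (\<Sum>s\<in>I'. 0) (sqrt (\<Sum>s\<in>I'. (\<bar>w s\<bar> * sd s)\<^sup>2)) x))"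
    by (rule sum_indep_normal[OF I'(1,2) ind']) (use pos I' N' in \<open>auto simp: I'_def\<close>)
  moreover have "(\<lambda>\<omega>. \<Sum>s\<in>I'. w s * X s \<omega>) = (\<lambda>\<omega>. \<Sum>s\<in>I. w s * X s \<omega>)"
    by (rule ext, rule sum.mono_neutral_left) (use fin in \<open>auto simp: I'_def\<close>)
  moreover have "(\<Sum>s\<in>I'. (\<bar>w s\<bar> * sd s)\<^sup>2) = (\<Sum>s\<in>I. (w s * sd s)\<^sup>2)"
  proof -
    have "(\<Sum>s\<in>I'. (\<bar>w s\<bar> * sd s)\<^sup>2) = (\<Sum>s\<in>I'. (w s * sd s)\<^sup>2)"
      by (simp add: power_mult_distrib)
    also have "\<dots> = (\<Sum>s\<in>I. (w s * sd s)\<^sup>2)"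
      by (rule sum.mono_neutral_left) (use fin in \<open>auto simp: I'_def\<close>)
    finally show ?thesis .
  qed
  ultimately show ?thesis by simp
qed



lemma (in prob_space) indep_vars_slice:
  assumes ind: "indep_vars (\<lambda>_. borel) V (I \<times> J)" and c: "c \<in> J"
  shows "indep_vars (\<lambda>_. borel) (\<lambda>s. V (s, c)) I"
proof -
  have "indep_vars (\<lambda>s. PiM {(s, c)} (\<lambda>_. borel)) (\<lambda>s \<omega>. restrict (\<lambda>p. V p \<omega>) {(s, c)}) I"
    by (rule indep_vars_restrict[OF ind]) (use c in \<open>auto simp: disjoint_family_on_def\<close>)
  hence "indep_vars (\<lambda>_. borel) (\<lambda>s \<omega>. (\<lambda>g. g (s, c)) (restrict (\<lambda>p. V p \<omega>) {(s, c)})) I"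
    by (rule indep_vars_compose2) (rule measurable_component_singleton, simp)
  thus ?thesis by simp
qed

lemma (in prob_space) indep_vars_columns:
  fixes V :: "('s \<times> 'c) \<Rightarrow> 'a \<Rightarrow> real"
  assumes ind: "indep_vars (\<lambda>_. borel) V (I \<times> UNIV)" and fin: "finite I"
  shows "indep_vars (\<lambda>_. borel) (\<lambda>c \<omega>. (\<Sum>s\<in>I. w s * V (s, c) \<omega>) / q) UNIV"
proof -
  have "indep_vars (\<lambda>c. PiM (I \<times> {c}) (\<lambda>_. borel)) (\<lambda>c \<omega>. restrict (\<lambda>p. V p \<omega>) (I \<times> {c})) UNIV"
    by (rule indep_vars_restrict[OF ind]) (auto simp: disjoint_family_on_def)
  hence "indep_vars (\<lambda>_. borel) (\<lambda>c \<omega>. (\<lambda>g. (\<Sum>s\<in>I. w s * g (s, c)) / q) (restrict (\<lambda>p. V p \<omega>) (I \<times> {c}))) UNIV"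
  proof (rule indep_vars_compose2)
    fix c :: 'c
    show "(\<lambda>g. (\<Sum>s\<in>I. w s * g (s, c)) / q) \<in> borel_measurable (PiM (I \<times> {c}) (\<lambda>_. borel))"
    proof (intro borel_measurable_divide borel_measurable_sum borel_measurable_times measurable_const)
      fix s assume "s \<in> I"
      thus "(\<lambda>g. g (s, c)) \<in> borel_measurable (PiM (I \<times> {c}) (\<lambda>_. borel))"
        by (intro measurable_component_singleton[where M="\<lambda>_. borel", simplified]) auto
    qed simp_all
  qed
  moreover have "(\<lambda>c \<omega>. (\<lambda>g. (\<Sum>s\<in>I. w s * g (s, c)) / q) (restrict (\<lambda>p. V p \<omega>) (I \<times> {c})))
      = (\<lambda>c \<omega>. (\<Sum>s\<in>I. w s * V (s, c) \<omega>) / q)"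
    by (intro ext) (auto intro!: sum.cong)
  ultimately show ?thesis by simp
qed

lemma norm_sq_vec: "(norm (v::real^'n))\<^sup>2 = (\<Sum>c\<in>UNIV. (v $ c)\<^sup>2)"
  unfolding power2_norm_eq_inner inner_vec_def by (simp add: power2_eq_square)

lemma sum_Plus': "finite A \<Longrightarrow> finite B \<Longrightarrow> (\<Sum>s\<in>A <+> B. f s) = (\<Sum>k\<in>A. f (Inl k)) + (\<Sum>k\<in>B. f (Inr k))"
  by (simp add: sum.Plus comp_def)

theorem lemma3p2:
  fixes M :: "'a measure"
    and mu :: "nat \<Rightarrow> 'a \<Rightarrow> real^'d"
    and xi :: "nat \<Rightarrow> 'a \<Rightarrow> real^'d"
    and z :: "nat \<Rightarrow> nat"
    and C :: "nat \<Rightarrow> nat set"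
    and n i j l :: nat
    and \<tau> \<sigma> :: real
  assumes "prob_space M"
    and "n \<ge> 2" and "\<tau> > 0" and "\<sigma> > 0"
    and indep: "prob_space.indep_vars M (\<lambda>_. borel)
        (\<lambda>(s, c) \<omega>. case s of Inl k \<Rightarrow> mu k \<omega> $ c | Inr k \<Rightarrow> xi k \<omega> $ c)
        (({1, 2} <+> {1..n}) \<times> UNIV)"
    and mu_distr: "\<And>k c. k \<in> {1, 2} \<Longrightarrow>
        distributed M lborel (\<lambda>\<omega>. mu k \<omega> $ c) (\<lambda>x. ennreal (normal_density 0 \<tau> x))"
    and xi_distr: "\<And>k c. k \<in> {1..n} \<Longrightarrow>
        distributed M lborel (\<lambda>\<omega>. xi k \<omega> $ c) (\<lambda>x. ennreal (normal_density 0 \<sigma> x))"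
    and labels: "\<forall>k\<in>{1..n}. z k \<in> {1, 2}"
    and S1: "{k\<in>{1..n}. z k = 1} \<noteq> {}"
    and S2: "{k\<in>{1..n}. z k = 2} \<noteq> {}"
    and part: "C 1 \<union> C 2 = {1..n}" "C 1 \<inter> C 2 = {}" "C 1 \<noteq> {}" "C 2 \<noteq> {}"
    and "i \<in> {1..n}" and "j \<in> {1, 2}" and "i \<in> C j" and "l = z i"
  shows "let jb = 3 - j;
             R = real (card (C jb \<inter> {k\<in>{1..n}. z k = l})) / real (card (C jb));
             \<alpha> = 2 * \<tau>\<^sup>2 * (1 - R)\<^sup>2 + (1 + 1 / real (card (C jb))) * \<sigma>\<^sup>2
         in scaled_chi2_distributed M
              (\<lambda>\<omega>. (norm (obs mu xi z i \<omega> - centroid mu xi z (C jb) \<omega>))\<^sup>2) \<alpha> CARD('d)"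
proof -
  interpret P: prob_space M by fact
  define jb where "jb = 3 - j"
  define Cb where "Cb = C jb"
  define m where "m = card Cb"
  define R where "R = real (card (Cb \<inter> {k\<in>{1..n}. z k = l})) / real m"
  define \<alpha> where "\<alpha> = 2 * \<tau>\<^sup>2 * (1 - R)\<^sup>2 + (1 + 1 / real m) * \<sigma>\<^sup>2"
  define l' where "l' = 3 - l"
  define I0 where "I0 = ({1, 2::nat} <+> {1..n})"
  define V where "V = (\<lambda>(s, c) \<omega>. case s of Inl k \<Rightarrow> mu k \<omega> $ c | Inr k \<Rightarrow> xi k \<omega> $ c)"
  define w where "w = (\<lambda>s::nat+nat. case s of Inl k \<Rightarrow> (if k = l then 1 - R else -(1 - R))
      | Inr k \<Rightarrow> (if k = i then 1 else 0) - (if k \<in> Cb then 1 / real m else 0))"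
  define sd where "sd = (\<lambda>s::nat+nat. case s of Inl k \<Rightarrow> \<tau> | Inr k \<Rightarrow> \<sigma>)"
  have jb: "jb \<in> {1, 2}" "jb \<noteq> j" using assms(16) by (auto simp: jb_def)
  have Cb_sub: "Cb \<subseteq> {1..n}" using part jb by (auto simp: Cb_def)
  have Cb_ne: "Cb \<noteq> {}" using part jb by (auto simp: Cb_def)
  have fin_Cb: "finite Cb" using Cb_sub finite_subset by blast
  have m_pos: "m > 0" using fin_Cb Cb_ne by (simp add: m_def card_gt_0_iff)
  have iCb: "i \<notin> Cb" using part jb assms(16,17) by (auto simp: Cb_def)
  have l12: "l \<in> {1, 2}" using labels assms(15,18) by auto
  have l'12: "l' \<in> {1, 2}" "l' \<noteq> l" using l12 by (auto simp: l'_def)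
  have finite12: "finite {1, 2::nat}" by simp
  have zCb: "\<And>k. k \<in> Cb \<Longrightarrow> z k = l \<or> z k = l'" using labels Cb_sub l12 by (auto simp: l'_def)
  have \<alpha>_pos: "\<alpha> > 0" unfolding \<alpha>_def using assms(4) m_pos
    by (intro add_nonneg_pos) (auto intro!: mult_pos_pos add_pos_nonneg)
  have E: "(obs mu xi z i \<omega> - centroid mu xi z Cb \<omega>) $ c = (\<Sum>s\<in>I0. w s * V (s, c) \<omega>)" for \<omega> c
  proof -
    define S where "S = {k\<in>{1..n}. z k = l}"
    define A where "A = card (Cb \<inter> S)"
    define B where "B = card (Cb - S)"
    define ml where "ml = mu l \<omega> $ c"
    define ml' where "ml' = mu l' \<omega> $ c"
    have zi: "z i = l" using assms(18) by simp
    have AB: "real A + real B = real m"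
      using card_Int_Diff[OF fin_Cb, of S] by (simp add: A_def B_def m_def)
    have RA: "R = real A / real m" by (simp add: R_def A_def S_def)
    have R1: "1 - R = real B / real m" using AB m_pos by (simp add: RA field_simps)
    have L: "(obs mu xi z i \<omega> - centroid mu xi z Cb \<omega>) $ c =
        ml + xi i \<omega> $ c - (1 / real m) * ((\<Sum>k\<in>Cb. mu (z k) \<omega> $ c) + (\<Sum>k\<in>Cb. xi k \<omega> $ c))"
      by (simp add: obs_def centroid_def m_def zi ml_def sum.distrib)
    have SM: "(\<Sum>k\<in>Cb. mu (z k) \<omega> $ c) = real A * ml + real B * ml'"
    proof -
      have "(\<Sum>k\<in>Cb. mu (z k) \<omega> $ c) = (\<Sum>k\<in>Cb \<inter> S. mu (z k) \<omega> $ c) + (\<Sum>k\<in>Cb - S. mu (z k) \<omega> $ c)"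
        by (rule sum.Int_Diff[OF fin_Cb])
      also have "(\<Sum>k\<in>Cb \<inter> S. mu (z k) \<omega> $ c) = (\<Sum>k\<in>Cb \<inter> S. ml)"
        by (rule sum.cong) (auto simp: S_def ml_def)
      also have "(\<Sum>k\<in>Cb - S. mu (z k) \<omega> $ c) = (\<Sum>k\<in>Cb - S. ml')"
      proof (rule sum.cong[OF refl])
        fix k assume k: "k \<in> Cb - S"
        hence "z k = l'" using zCb[of k] Cb_sub by (auto simp: S_def)
        thus "mu (z k) \<omega> $ c = ml'" by (simp add: ml'_def)
      qed
      finally show ?thesis by (simp add: A_def B_def)
    qed
    have P1: "(\<Sum>k\<in>{1, 2::nat}. w (Inl k) * V (Inl k, c) \<omega>) = (1 - R) * ml - (1 - R) * ml'"
      using l12 by (auto simp: w_def V_def ml_def ml'_def l'_def algebra_simps)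
    have P2: "(\<Sum>k\<in>{1..n}. w (Inr k) * V (Inr k, c) \<omega>) = xi i \<omega> $ c - (1 / real m) * (\<Sum>k\<in>Cb. xi k \<omega> $ c)"
    proof -
      have "(\<Sum>k\<in>{1..n}. w (Inr k) * V (Inr k, c) \<omega>) =
          (\<Sum>k\<in>{1..n}. (if k = i then xi k \<omega> $ c else 0)) - (\<Sum>k\<in>{1..n}. (if k \<in> Cb then (1 / real m) * xi k \<omega> $ c else 0))"
        unfolding sum_subtractf[symmetric]
        by (rule sum.cong[OF refl]) (simp add: w_def V_def left_diff_distrib)
      also have "(\<Sum>k\<in>{1..n}. (if k = i then xi k \<omega> $ c else 0)) = xi i \<omega> $ c"
        using assms(15) by (simp add: sum.delta')
      also have "(\<Sum>k\<in>{1..n}. (if k \<in> Cb then (1 / real m) * xi k \<omega> $ c else 0)) = (\<Sum>k\<in>{1..n} \<inter> Cb. (1 / real m) * xi k \<omega> $ c)"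
        by (rule sum.inter_restrict[symmetric]) simp
      also have "{1..n} \<inter> Cb = Cb" using Cb_sub by blast
      finally show ?thesis by (simp add: sum_distrib_left)
    qed
    have RHS: "(\<Sum>s\<in>I0. w s * V (s, c) \<omega>) = (1 - R) * ml - (1 - R) * ml' + (xi i \<omega> $ c - (1 / real m) * (\<Sum>k\<in>Cb. xi k \<omega> $ c))"
      unfolding I0_def sum_Plus'[OF finite12 finite_atLeastAtMost] P1 P2 ..
    have Aeq: "real A = real m - real B" using AB by simp
    have mne: "real m \<noteq> 0" using m_pos by simp
    show ?thesis unfolding L RHS SM R1 Aeq using mne
      by (simp add: field_simps)
  qed
  have var: "(\<Sum>s\<in>I0. (w s * sd s)\<^sup>2) = \<alpha>"
  proof -
    have P1: "(\<Sum>k\<in>{1, 2::nat}. (w (Inl k) * sd (Inl k))\<^sup>2) = 2 * \<tau>\<^sup>2 * (1 - R)\<^sup>2"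
    proof -
      have "(R - 1)\<^sup>2 = (1 - R)\<^sup>2" by (simp add: power2_commute)
      thus ?thesis using l12 by (auto simp: w_def sd_def power_mult_distrib)
    qed
    have pt: "((w (Inr k) * sd (Inr k))\<^sup>2) = \<sigma>\<^sup>2 * ((if k = i then 1 else 0) + (if k \<in> Cb then 1 / (real m)\<^sup>2 else 0))" for k
      using iCb by (auto simp: w_def sd_def power_mult_distrib power_divide)
    have P2: "(\<Sum>k\<in>{1..n}. (w (Inr k) * sd (Inr k))\<^sup>2) = (1 + 1 / real m) * \<sigma>\<^sup>2"
    proof -
      have "(\<Sum>k\<in>{1..n}. (w (Inr k) * sd (Inr k))\<^sup>2) =
          \<sigma>\<^sup>2 * ((\<Sum>k\<in>{1..n}. (if k = i then 1 else 0)) + (\<Sum>k\<in>{1..n}. (if k \<in> Cb then 1 / (real m)\<^sup>2 else 0)))"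
        by (simp only: pt sum_distrib_left[symmetric] sum.distrib)
      also have "(\<Sum>k\<in>{1..n}. (if k = i then 1 else 0)) = (1::real)"
        using assms(15) by (simp add: sum.delta')
      also have "(\<Sum>k\<in>{1..n}. (if k \<in> Cb then 1 / (real m)\<^sup>2 else 0)) = (\<Sum>k\<in>{1..n} \<inter> Cb. 1 / (real m)\<^sup>2)"
        by (rule sum.inter_restrict[symmetric]) simp
      also have "{1..n} \<inter> Cb = Cb" using Cb_sub by blast
      finally show ?thesis using m_pos by (simp add: m_def[symmetric] power2_eq_square field_simps)
    qed
    show ?thesis unfolding I0_def \<alpha>_def sum_Plus'[OF finite12 finite_atLeastAtMost] P1 P2 ..
  qed
  have indV: "P.indep_vars (\<lambda>_. borel) V (I0 \<times> UNIV)"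
    using indep unfolding V_def I0_def .
  have finI0: "finite I0" by (simp add: I0_def)
  have normal: "distributed M lborel (\<lambda>\<omega>. \<Sum>s\<in>I0. w s * V (s, c) \<omega>) (\<lambda>x. ennreal (normal_density 0 (sqrt \<alpha>) x))" for c
  proof -
    have "distributed M lborel (\<lambda>\<omega>. \<Sum>s\<in>I0. w s * V (s, c) \<omega>)
           (\<lambda>x. ennreal (normal_density 0 (sqrt (\<Sum>s\<in>I0. (w s * sd s)\<^sup>2)) x))"
    proof (rule P.weighted_sum_normal[OF finI0 P.indep_vars_slice[OF indV]])
      show "Inr i \<in> I0" "w (Inr i) \<noteq> 0" using assms(15) iCb by (auto simp: I0_def w_def)
      fix s assume "s \<in> I0"
      thus "sd s > 0" using assms(3,4) by (auto simp: sd_def I0_def)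
      show "distributed M lborel (\<lambda>\<omega>. V (s, c) \<omega>) (\<lambda>x. ennreal (normal_density 0 (sd s) x))"
        using \<open>s \<in> I0\<close> mu_distr xi_distr by (auto simp: I0_def V_def sd_def)
    qed simp
    thus ?thesis by (simp add: var)
  qed
  define Z where "Z = (\<lambda>c \<omega>. (\<Sum>s\<in>I0. w s * V (s, c) \<omega>) / sqrt \<alpha>)"
  have indZ: "P.indep_vars (\<lambda>_. borel) Z UNIV"
    unfolding Z_def by (rule P.indep_vars_columns[OF indV finI0])
  have stdZ: "distributed M lborel (Z c) (\<lambda>x. ennreal (std_normal_density x))" for c
    using P.normal_standard_normal_convert[of "sqrt \<alpha>" "\<lambda>\<omega>. \<Sum>s\<in>I0. w s * V (s, c) \<omega>" 0] normal[of c] \<alpha>_pos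
    by (simp add: Z_def)
  have chi: "distributed M lborel (\<lambda>\<omega>. \<Sum>c\<in>UNIV. (Z c \<omega>)\<^sup>2) (\<lambda>x. ennreal (chi2_density CARD('d) x))"
    by (rule P.chi2_sum_sq[OF _ _ indZ stdZ]) simp_all
  have eqf: "(\<lambda>\<omega>. (norm (obs mu xi z i \<omega> - centroid mu xi z Cb \<omega>))\<^sup>2 / \<alpha>) = (\<lambda>\<omega>. \<Sum>c\<in>UNIV. (Z c \<omega>)\<^sup>2)"
  proof
    fix \<omega>
    have "(norm (obs mu xi z i \<omega> - centroid mu xi z Cb \<omega>))\<^sup>2 = (\<Sum>c\<in>UNIV. ((obs mu xi z i \<omega> - centroid mu xi z Cb \<omega>) $ c)\<^sup>2)"
      by (rule norm_sq_vec)
    also have "\<dots> = (\<Sum>c\<in>UNIV. \<alpha> * (Z c \<omega>)\<^sup>2)"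
      using \<alpha>_pos E by (intro sum.cong refl) (simp add: Z_def power_divide)
    finally show "(norm (obs mu xi z i \<omega> - centroid mu xi z Cb \<omega>))\<^sup>2 / \<alpha> = (\<Sum>c\<in>UNIV. (Z c \<omega>)\<^sup>2)"
      using \<alpha>_pos by (simp add: sum_distrib_left[symmetric])
  qed
  have "scaled_chi2_distributed M (\<lambda>\<omega>. (norm (obs mu xi z i \<omega> - centroid mu xi z Cb \<omega>))\<^sup>2) \<alpha> CARD('d)"
    unfolding scaled_chi2_distributed_def eqf using chi .
  thus ?thesis unfolding Let_def \<alpha>_def R_def m_def Cb_def jb_def .
qed

end
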